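(* Let $\mathcal M\otimes\mathcal A_\varphi$ be the product of a labelled MDP $\mathcal M=(S,\mathit{Act},P,\mu)$ with labelling $L$ and a deterministic Streett automaton $\mathcal A_\varphi=(Q,2^{AP},\delta,q_0,\mathit{Acc})$, with state space $S\times Q$. Let $\pi$ be a stationary policy on the product, $0<\gamma<1$, $(A,B)\in\mathit{Acc}$, and $I\subseteq S\times Q$ measurable. Assume: (1) $I$ is absorbing under $\pi$ and $\mu^\otimes(I)=1$; (2) there is $\bar H<\infty$ with $\mathbb{E}_\pi[\mathrm{step}^{(S\times A,S\times B)}\mid S_0=x]\le\bar H$ for all $x\in I$; (3) the reward is $r^\otimes((s,q),a,(s',q'))=r_B\mathbf 1_{\{(s,q)\in S\times B\}}-r_{A\setminus B}\mathbf 1_{\{(s,q)\in(S\times A)\setminus(S\times B)\}}$ with $r_B,r_{A\setminus B}>0$ and $\frac{r_B}{r_{A\setminus B}}\ge\frac1{1-\gamma}\left(\frac1{\gamma^{\bar H+1}}-1\right)$; (4) the discount is state-dependent: $\Gamma(s,q)=\gamma$ if $q\in A\cup B$ and $\Gamma(s,q)=1$ otherwise. Then $W(s,q):=C-V^\pi(s,q)$ on $I$, with $C:=\frac{r_B}{1-\gamma}$, is a Streett supermartingale for $(S\times A,S\times B)$ on $\mathcal M\otimes\mathcal A_\varphi$ with supporting invariant $I$.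
   Context: An MDP $(S,\mathit{Act},P,\mu)$ has state/action spaces finite/countable or Borel subsets of Euclidean space, a stochastic kernel $P$ on $S$ given $S\times\mathit{Act}$ and initial distribution $\mu$. A labelled MDP additionally has finite $AP$ and $L:S\to2^{AP}$. A deterministic Streett automaton is $(Q,2^{AP},\delta,q_0,\mathit{Acc})$ with finite $Q$, $\delta:Q\times2^{AP}\to Q$, $q_0\in Q$, $\mathit{Acc}$ a finite set of pairs $(A_i,B_i)$ of subsets of $Q$. The product MDP has state space $S\times Q$, transitions from $(s,q)$ under $a$ to $(s',\delta(q,L(s)))$ with $s'\sim P(\cdot\mid s,a)$, initial distribution $\mu^\otimes=\mu\otimes\delta_{q_0}$. A stationary policy $\pi$ is a stochastic kernel on actions given states; $\Pr_\pi(\cdot\mid S_0=x)$, $\mathbb{E}_\pi[\cdot\mid S_0=x]$ refer to the product process started at $x$. A measurable set $X$ is absorbing if $\Pr_\pi(S_1\in X\mid S_0=x)=1$ for all $x\in X$. For a run $\rho=(x_0,x_1,\dots)$ and sets $A',B'$: $\mathrm{step}^{(A',B')}(\rho):=|\{i:0\le i<\min\{j\ge0:x_j\in B'\},\ x_i\in A'\}|$ ($\min\emptyset=\infty$); $N^U_t(\rho):=|\{i:0\le i<t,\ x_i\in U\}|$. With discount $\Gamma$, $V^\pi(x)=\mathbb{E}_\pi[\sum_{t\ge0}\gamma^{N_t^{S\times(A\cup B)}}r^\otimes(S_t,A_t,S_{t+1})\mid S_0=x]$. Streett supermartingale: for measurable $A',B',I$, $W:I\to[0,\infty)$ is a Streett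 supermartingale for $(A',B')$ with supporting invariant $I$ if $\mu^\otimes(I)=1$, $\Pr_\pi(S_1\in I\mid S_0=x)=1$ for $x\in I$, there is $\varepsilon>0$ with $\mathbb{E}_\pi[W(S_1)\mid S_0=x]\le W(x)-\varepsilon$ for $x\in(A'\setminus B')\cap I$, and $\mathbb{E}_\pi[W(S_1)\mid S_0=x]\le W(x)$ for $x\in I\setminus(A'\cup B')$. *)

theory Defs
  imports "HOL-Probability.Probability"
begin

definition labelled_mdp ::
  "'s measure \<Rightarrow> 'act measure \<Rightarrow> ('s \<times> 'act \<Rightarrow> 's measure) \<Rightarrow> 's measure
   \<Rightarrow> 'ap set \<Rightarrow> ('s \<Rightarrow> 'ap set) \<Rightarrow> bool" where
  "labelled_mdp SM AM P mu AP L \<longleftrightarrow>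
     P \<in> measurable (SM \<Otimes>\<^sub>M AM) (prob_algebra SM) \<and>
     prob_space mu \<and> sets mu = sets SM \<and>
     finite AP \<and> L \<in> measurable SM (count_space (Pow AP))"

definition det_streett ::
  "'q set \<Rightarrow> 'ap set \<Rightarrow> ('q \<Rightarrow> 'ap set \<Rightarrow> 'q) \<Rightarrow> 'q \<Rightarrow> ('q set \<times> 'q set) set \<Rightarrow> bool" where
  "det_streett Q AP delta q0 Acc \<longleftrightarrow>
     finite Q \<and> q0 \<in> Q \<and> (\<forall>q\<in>Q. \<forall>l\<in>Pow AP. delta q l \<in> Q) \<and>
     finite Acc \<and> (\<forall>(A, B)\<in>Acc. A \<subseteq> Q \<and> B \<subseteq> Q)"

definition prod_space :: "'s measure \<Rightarrow> 'q set \<Rightarrow> ('s \<times> 'q) measure" where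
  "prod_space SM Q = SM \<Otimes>\<^sub>M count_space Q"

definition prod_kernel ::
  "'s measure \<Rightarrow> 'q set \<Rightarrow> ('s \<Rightarrow> 'ap set) \<Rightarrow> ('q \<Rightarrow> 'ap set \<Rightarrow> 'q)
   \<Rightarrow> ('s \<times> 'act \<Rightarrow> 's measure) \<Rightarrow> ('s \<times> 'q) \<times> 'act \<Rightarrow> ('s \<times> 'q) measure" where
  "prod_kernel SM Q L delta P = (\<lambda>((s, q), a).
     distr (P (s, a)) (prod_space SM Q) (\<lambda>s'. (s', delta q (L s))))"

definition prod_init :: "'s measure \<Rightarrow> 'q set \<Rightarrow> 'q \<Rightarrow> 's measure \<Rightarrow> ('s \<times> 'q) measure" where
  "prod_init SM Q q0 mu = distr mu (prod_space SM Q) (\<lambda>s. (s, q0))"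

definition stationary_policy :: "'x measure \<Rightarrow> 'act measure \<Rightarrow> ('x \<Rightarrow> 'act measure) \<Rightarrow> bool" where
  "stationary_policy X AM pol \<longleftrightarrow> pol \<in> measurable X (prob_algebra AM)"

definition St :: "nat \<Rightarrow> ('x \<times> 'act) stream \<Rightarrow> 'x" where
  "St t \<omega> = fst (\<omega> !! t)"

definition At :: "nat \<Rightarrow> ('x \<times> 'act) stream \<Rightarrow> 'act" where
  "At t \<omega> = snd (\<omega> !! t)"

text \<open>This fixed-point equation (together with being a measurable
  probability kernel) determines Pr uniquely (Ionescu-Tulcea).\<close>
definition process_law ::
  "'x measure \<Rightarrow> 'act measure \<Rightarrow> ('x \<times> 'act \<Rightarrow> 'x measure) \<Rightarrow> ('x \<Rightarrow> 'act measure)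
   \<Rightarrow> ('x \<Rightarrow> ('x \<times> 'act) stream measure) \<Rightarrow> bool" where
  "process_law X AM K pol Pr \<longleftrightarrow>
     Pr \<in> measurable X (prob_algebra (stream_space (X \<Otimes>\<^sub>M AM))) \<and>
     (\<forall>x\<in>space X. Pr x =
        pol x \<bind> (\<lambda>a. K (x, a) \<bind>
          (\<lambda>x'. distr (Pr x') (stream_space (X \<Otimes>\<^sub>M AM)) (\<lambda>\<omega>. (x, a) ## \<omega>))))"

definition absorbing :: "'x measure \<Rightarrow> ('x \<Rightarrow> ('x \<times> 'act) stream measure) \<Rightarrow> 'x set \<Rightarrow> bool" where
  "absorbing X Pr Y \<longleftrightarrow> Y \<in> sets X \<and>
     (\<forall>x\<in>Y. measure (Pr x) {\<omega> \<in> space (Pr x). St 1 \<omega> \<in> Y} = 1)"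

text \<open>step^(A',B')(rho) = |{i. 0 \<le> i < min{j. x_j \<in> B'}, x_i \<in> A'}|, with min {} = infinity;
  valued in [0, infinity].\<close>
definition step_count :: "'x set \<Rightarrow> 'x set \<Rightarrow> 'x stream \<Rightarrow> ennreal" where
  "step_count A' B' \<rho> =
     (let T = {i. (\<forall>j\<le>i. \<rho> !! j \<notin> B') \<and> \<rho> !! i \<in> A'}
      in if finite T then of_nat (card T) else \<infinity>)"

definition N_count :: "'x set \<Rightarrow> nat \<Rightarrow> 'x stream \<Rightarrow> nat" where
  "N_count U t \<rho> = card {i. i < t \<and> \<rho> !! i \<in> U}"

text \<open>With Gam = gamma on S x (A \<union> B) and 1 elsewhere, the discount factor
  prod_{i<t} Gam(S_i) equals gamma ^ N_t^{S x (A \<union> B)}.\<close>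
definition value_fun ::
  "('x \<Rightarrow> ('x \<times> 'act) stream measure) \<Rightarrow> ('x \<Rightarrow> real) \<Rightarrow> ('x \<Rightarrow> 'act \<Rightarrow> 'x \<Rightarrow> real)
   \<Rightarrow> 'x \<Rightarrow> real" where
  "value_fun Pr Gam r x =
     (\<integral>\<omega>. (\<Sum>t. (\<Prod>i<t. Gam (St i \<omega>)) * r (St t \<omega>) (At t \<omega>) (St (Suc t) \<omega>)) \<partial>Pr x)"

text \<open>W : I \<rightarrow> [0, \<infinity>) is a Streett supermartingale for (A', B') with supporting invariant I
  (w.r.t. the process laws Pr and the initial distribution mu0). Only the values of W on
  I matter. Expectations of the nonnegative W(S_1) are taken in [0, \<infinity>].\<close>
definition streett_supermartingale ::
  "('x \<Rightarrow> ('x \<times> 'act) stream measure) \<Rightarrow> 'x measure \<Rightarrow> 'x set \<Rightarrow> 'x set \<Rightarrow> 'x set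
   \<Rightarrow> ('x \<Rightarrow> real) \<Rightarrow> bool" where
  "streett_supermartingale Pr mu0 A' B' I W \<longleftrightarrow>
     (\<forall>x\<in>I. 0 \<le> W x) \<and>
     measure mu0 I = 1 \<and>
     (\<forall>x\<in>I. measure (Pr x) {\<omega> \<in> space (Pr x). St 1 \<omega> \<in> I} = 1) \<and>
     (\<exists>\<epsilon>>0. \<forall>x\<in>(A' - B') \<inter> I.
        (\<integral>\<^sup>+\<omega>. ennreal (W (St 1 \<omega>)) \<partial>Pr x) + ennreal \<epsilon> \<le> ennreal (W x)) \<and>
     (\<forall>x\<in>I - (A' \<union> B').
        (\<integral>\<^sup>+\<omega>. ennreal (W (St 1 \<omega>)) \<partial>Pr x) \<le> ennreal (W x))"

end

theory Submission
  imports Defs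
begin


definition dsc :: "real \<Rightarrow> 'x set \<Rightarrow> (nat \<Rightarrow> 'x) \<Rightarrow> nat \<Rightarrow> real" where
  "dsc g U x t = (\<Prod>i<t. if x i \<in> U then g else 1)"

definition rho :: "real \<Rightarrow> real \<Rightarrow> 'x set \<Rightarrow> 'x set \<Rightarrow> 'x \<Rightarrow> real" where
  "rho rB rAB As Bs y = rB * indicator Bs y - rAB * indicator (As - Bs) y"

lemma dsc_0[simp]: "dsc g U x 0 = 1" by (simp add: dsc_def)

lemma dsc_Suc: "dsc g U x (Suc t) = dsc g U x t * (if x t \<in> U then g else 1)"
  by (simp add: dsc_def lessThan_Suc mult.commute)

lemma dsc_pow: "dsc g U x t = g ^ card {i. i < t \<and> x i \<in> U}"
proof (induction t)
  case 0 then show ?case by simp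
next
  case (Suc t)
  have "{i. i < Suc t \<and> x i \<in> U} = {i. i < t \<and> x i \<in> U} \<union> (if x t \<in> U then {t} else {})"
    by (auto simp: less_Suc_eq)
  moreover have "finite {i. i < t \<and> x i \<in> U}" by simp
  ultimately show ?case using Suc by (auto simp: dsc_Suc)
qed

lemma dsc_nonneg: "0 \<le> g \<Longrightarrow> 0 \<le> dsc g U x t"
  by (simp add: dsc_pow)

lemma dsc_le1: "0 \<le> g \<Longrightarrow> g \<le> 1 \<Longrightarrow> dsc g U x t \<le> 1"
  by (simp add: dsc_pow power_le_one)

lemma dsc_partial:
  assumes "g \<noteq> 1"
  shows "(\<Sum>t<n. dsc g U x t * indicator U (x t)) = (1 - dsc g U x n) / (1 - g)"
proof (induction n)
  case 0 then show ?case by simp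
next
  case (Suc n)
  have "1 - g \<noteq> 0" using assms by simp
  then show ?case using Suc by (auto simp: dsc_Suc field_simps indicator_def)
qed

lemma path_facts:
  fixes g rB rAB :: real and xs :: "'x stream"
  assumes g: "0 < g" "g < 1" and r: "0 < rB" "0 < rAB"
  shows "summable (\<lambda>t. dsc g (As \<union> Bs) ((!!) xs) t * rho rB rAB As Bs (xs !! t))"
    and "- rAB / (1 - g) \<le> (\<Sum>t. dsc g (As \<union> Bs) ((!!) xs) t * rho rB rAB As Bs (xs !! t))"
    and "(\<Sum>t. dsc g (As \<union> Bs) ((!!) xs) t * rho rB rAB As Bs (xs !! t)) \<le> rB / (1 - g)"
    and "step_count As Bs xs < of_nat N \<Longrightarrow>
           rAB * g ^ N \<le> (\<Sum>t. dsc g (As \<union> Bs) ((!!) xs) t * rho rB rAB As Bs (xs !! t)) + rAB / (1 - g)"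
proof -
  define U where "U = As \<union> Bs"
  define x where "x = (!!) xs"
  define d where "d = dsc g U x"
  define I where "I = (\<lambda>t. d t * indicator U (x t))"
  define f where "f = (\<lambda>t. d t * rho rB rAB As Bs (x t))"
  have fdef: "(\<lambda>t. dsc g (As \<union> Bs) ((!!) xs) t * rho rB rAB As Bs (xs !! t)) = f"
    by (simp add: f_def d_def U_def x_def)
  have d0: "0 \<le> d t" for t using g by (simp add: d_def dsc_nonneg)
  have I0: "0 \<le> I t" for t using d0 by (simp add: I_def)
  have Ipart: "sum I {..<n} = (1 - d n) / (1 - g)" for n
    using g unfolding I_def d_def by (intro dsc_partial) simp
  have Ipart_le: "sum I {..<n} \<le> 1 / (1 - g)" for n
    unfolding Ipart using g d0[of n] by (simp add: divide_right_mono)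
  have Is: "summable I" by (rule summableI_nonneg_bounded[OF I0 Ipart_le])
  have SU_le: "suminf I \<le> 1 / (1 - g)" by (rule suminf_le_const[OF Is Ipart_le])
  have SU_ge: "0 \<le> suminf I" using Is I0 by (simp add: suminf_nonneg)
  have fb: "- rAB * I t \<le> f t \<and> f t \<le> rB * I t" for t
    using d0[of t] r mult_nonneg_nonneg[OF d0[of t], of rB] mult_nonneg_nonneg[OF d0[of t], of rAB]
    unfolding f_def I_def rho_def U_def by (auto simp: indicator_def algebra_simps)
  have fn: "norm (f t) \<le> (rB + rAB) * I t" for t
  proof -
    have "0 \<le> rAB * I t" "0 \<le> rB * I t" using I0[of t] r by simp_all
    then show ?thesis unfolding real_norm_def abs_le_iff distrib_right using fb[of t] by linarith
  qed
  have fs: "summable f"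
    by (rule summable_comparison_test[OF _ summable_mult[OF Is]]) (use fn in auto)
  then show "summable (\<lambda>t. dsc g (As \<union> Bs) ((!!) xs) t * rho rB rAB As Bs (xs !! t))"
    by (simp add: fdef)
  have "suminf f \<le> suminf (\<lambda>t. rB * I t)"
    by (rule suminf_le) (use fb fs Is in \<open>auto intro: summable_mult\<close>)
  also have "\<dots> = rB * suminf I" using Is by (simp add: suminf_mult)
  also have "\<dots> \<le> rB * (1 / (1 - g))" using SU_le r by (intro mult_left_mono) auto
  finally show "(\<Sum>t. dsc g (As \<union> Bs) ((!!) xs) t * rho rB rAB As Bs (xs !! t)) \<le> rB / (1 - g)"
    by (simp add: fdef)
  have "- rAB * (1 / (1 - g)) \<le> - rAB * suminf I" using mult_left_mono[OF SU_le, of rAB] r by simp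
  also have "\<dots> = suminf (\<lambda>t. - rAB * I t)" using suminf_mult[OF Is, of "- rAB"] by simp
  also have "\<dots> \<le> suminf f"
    by (rule suminf_le) (use fb fs summable_mult[OF Is, of "- rAB"] in auto)
  finally show "- rAB / (1 - g) \<le> (\<Sum>t. dsc g (As \<union> Bs) ((!!) xs) t * rho rB rAB As Bs (xs !! t))"
    by (simp add: fdef)
  assume K: "step_count As Bs xs < of_nat N"
  define T where "T = {i. (\<forall>j\<le>i. xs !! j \<notin> Bs) \<and> xs !! i \<in> As}"
  have KT: "finite T \<and> card T < N"
    using K unfolding step_count_def T_def[symmetric] Let_def by (auto split: if_splits)
  define h where "h = (\<lambda>t. f t + rAB * I t)"
  have h0: "0 \<le> h t" for t using fb[of t] by (simp add: h_def)
  have hs: "summable h" unfolding h_def by (intro summable_add fs summable_mult Is)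
  have fh: "suminf f = suminf h - rAB * suminf I"
    unfolding h_def using fs Is by (simp add: suminf_add[symmetric] suminf_mult summable_mult)
  have gN: "g ^ N \<le> g ^ card T" using KT g by (intro power_decreasing) auto
  have "rAB * g ^ N \<le> suminf h + rAB * (1 / (1 - g) - suminf I)"
  proof (cases "\<exists>t. x t \<in> Bs")
    case True
    define \<tau> where "\<tau> = (LEAST t. x t \<in> Bs)"
    have tB: "x \<tau> \<in> Bs" unfolding \<tau>_def using True by (rule LeastI_ex)
    have tmin: "t < \<tau> \<Longrightarrow> x t \<notin> Bs" for t unfolding \<tau>_def by (rule not_less_Least)
    have Teq: "{i. i < \<tau> \<and> x i \<in> U} = T"
    proof safe
      fix i assume "i < \<tau>" "x i \<in> U"
      then show "i \<in> T" using tmin unfolding T_def U_def x_def by auto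
    next
      fix i assume "i \<in> T"
      then have "\<forall>j\<le>i. x j \<notin> Bs" "x i \<in> As" unfolding T_def x_def by auto
      then show "i < \<tau>" using tB by (metis not_less)
      show "x i \<in> U" using \<open>x i \<in> As\<close> by (simp add: U_def)
    qed
    have dt: "d \<tau> = g ^ card T" unfolding d_def dsc_pow Teq[symmetric] ..
    have ht: "h \<tau> = d \<tau> * (rB + rAB)"
      using tB unfolding h_def f_def I_def rho_def U_def by (simp add: algebra_simps)
    have "h \<tau> \<le> suminf h"
      using sum_le_suminf[OF hs, of "{\<tau>}"] h0 by simp
    moreover have "rAB * g ^ N \<le> h \<tau>"
    proof -
      have "rAB * g ^ N \<le> rAB * g ^ card T" using gN r by simp
      also have "\<dots> \<le> g ^ card T * (rB + rAB)" using r g by (simp add: algebra_simps)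
      finally show ?thesis using ht dt by simp
    qed
    moreover have "0 \<le> rAB * (1 / (1 - g) - suminf I)" using SU_le r by simp
    ultimately show ?thesis by linarith
  next
    case False
    have cardle: "card {i. i < n \<and> x i \<in> U} \<le> card T" for n
      using KT False by (intro card_mono) (auto simp: T_def U_def x_def)
    have dge: "g ^ card T \<le> d n" for n
      unfolding d_def dsc_pow using g cardle by (intro power_decreasing) auto
    have "sum I {..<n} \<le> (1 - g ^ card T) / (1 - g)" for n
      unfolding Ipart using dge[of n] g by (intro divide_right_mono) auto
    then have "suminf I \<le> (1 - g ^ card T) / (1 - g)" by (rule suminf_le_const[OF Is])
    then have "g ^ card T / (1 - g) \<le> 1 / (1 - g) - suminf I"
      using g by (simp add: diff_divide_distrib)
    moreover have "g ^ card T \<le> g ^ card T / (1 - g)"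
      using g by (simp add: le_divide_eq)
    moreover have "0 \<le> suminf h" using hs h0 by (simp add: suminf_nonneg)
    ultimately have "g ^ N \<le> 1 / (1 - g) - suminf I" using gN by linarith
    then have "rAB * g ^ N \<le> rAB * (1 / (1 - g) - suminf I)" using r by simp
    then show ?thesis using \<open>0 \<le> suminf h\<close> by linarith
  qed
  then show "rAB * g ^ N \<le> (\<Sum>t. dsc g (As \<union> Bs) ((!!) xs) t * rho rB rAB As Bs (xs !! t)) + rAB / (1 - g)"
    unfolding fdef fh by (simp add: algebra_simps)
qed



lemma unfold_nn:
  fixes X :: "'x measure" and AM :: "'a measure"
  assumes law: "process_law X AM K pol Pr"
    and polm: "pol \<in> X \<rightarrow>\<^sub>M prob_algebra AM"
    and Km: "K \<in> X \<Otimes>\<^sub>M AM \<rightarrow>\<^sub>M prob_algebra X"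
    and x: "x \<in> space X"
    and F: "F \<in> borel_measurable (stream_space (X \<Otimes>\<^sub>M AM))"
  shows "(\<integral>\<^sup>+\<omega>. F \<omega> \<partial>Pr x) =
    (\<integral>\<^sup>+a. (\<integral>\<^sup>+x'. (\<integral>\<^sup>+\<omega>. F ((x, a) ## \<omega>) \<partial>Pr x') \<partial>K (x, a)) \<partial>pol x)"
proof -
  let ?S = "stream_space (X \<Otimes>\<^sub>M AM)"
  have Prm[measurable]: "Pr \<in> X \<rightarrow>\<^sub>M prob_algebra ?S" using law by (simp add: process_law_def)
  have eq: "Pr x = pol x \<bind> (\<lambda>a. K (x, a) \<bind> (\<lambda>x'. distr (Pr x') ?S (\<lambda>\<omega>. (x, a) ## \<omega>)))"
    using law x by (simp add: process_law_def)
  note Km[measurable] polm[measurable]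
  have Kx[measurable]: "(\<lambda>a. K (x, a)) \<in> AM \<rightarrow>\<^sub>M prob_algebra X"
    using x by measurable
  have Dm[measurable]: "(\<lambda>(a, x'). distr (Pr x') ?S (\<lambda>\<omega>. (x, a) ## \<omega>)) \<in> AM \<Otimes>\<^sub>M X \<rightarrow>\<^sub>M prob_algebra ?S"
    using x by measurable
  have Mm: "(\<lambda>a. K (x, a) \<bind> (\<lambda>x'. distr (Pr x') ?S (\<lambda>\<omega>. (x, a) ## \<omega>))) \<in> AM \<rightarrow>\<^sub>M prob_algebra ?S"
    using x by measurable
  have polx: "pol x \<in> space (prob_algebra AM)" using measurable_space[OF polm x] .
  then have spol: "sets (pol x) = sets AM" by (simp add: space_prob_algebra)
  have "(\<integral>\<^sup>+\<omega>. F \<omega> \<partial>Pr x) = (\<integral>\<^sup>+a. (\<integral>\<^sup>+\<omega>. F \<omega> \<partial>(K (x, a) \<bind> (\<lambda>x'. distr (Pr x') ?S (\<lambda>\<omega>. (x, a) ## \<omega>)))) \<partial>pol x)"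
    unfolding eq
    by (rule nn_integral_bind[OF F]) (use measurable_prob_algebraD[OF Mm] spol in \<open>simp cong: measurable_cong_sets\<close>)
  also have "\<dots> = (\<integral>\<^sup>+a. (\<integral>\<^sup>+x'. (\<integral>\<^sup>+\<omega>. F ((x, a) ## \<omega>) \<partial>Pr x') \<partial>K (x, a)) \<partial>pol x)"
  proof (rule nn_integral_cong)
    fix a assume "a \<in> space (pol x)"
    then have a: "a \<in> space AM" using sets_eq_imp_space_eq[OF spol] by simp
    have Kxa: "K (x, a) \<in> space (prob_algebra X)" using measurable_space[OF Kx a] .
    then have sK: "sets (K (x, a)) = sets X" by (simp add: space_prob_algebra)
    have Nm: "(\<lambda>x'. distr (Pr x') ?S (\<lambda>\<omega>. (x, a) ## \<omega>)) \<in> X \<rightarrow>\<^sub>M prob_algebra ?S"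
      using x a by measurable
    have "(\<integral>\<^sup>+\<omega>. F \<omega> \<partial>(K (x, a) \<bind> (\<lambda>x'. distr (Pr x') ?S (\<lambda>\<omega>. (x, a) ## \<omega>)))) =
        (\<integral>\<^sup>+x'. (\<integral>\<^sup>+\<omega>. F \<omega> \<partial>distr (Pr x') ?S (\<lambda>\<omega>. (x, a) ## \<omega>)) \<partial>K (x, a))"
      by (rule nn_integral_bind[OF F]) (use measurable_prob_algebraD[OF Nm] sK in \<open>simp cong: measurable_cong_sets\<close>)
    also have "\<dots> = (\<integral>\<^sup>+x'. (\<integral>\<^sup>+\<omega>. F ((x, a) ## \<omega>) \<partial>Pr x') \<partial>K (x, a))"
    proof (rule nn_integral_cong)
      fix x' assume "x' \<in> space (K (x, a))"
      then have x': "x' \<in> space X" using sets_eq_imp_space_eq[OF sK] by simp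
      have "Pr x' \<in> space (prob_algebra ?S)" using measurable_space[OF Prm x'] .
      then have sP: "sets (Pr x') = sets ?S" by (simp add: space_prob_algebra)
      have cm: "(\<lambda>\<omega>. (x, a) ## \<omega>) \<in> Pr x' \<rightarrow>\<^sub>M ?S"
        using x a by (simp add: measurable_cong_sets[OF sP refl])
      show "(\<integral>\<^sup>+\<omega>. F \<omega> \<partial>distr (Pr x') ?S (\<lambda>\<omega>. (x, a) ## \<omega>)) = (\<integral>\<^sup>+\<omega>. F ((x, a) ## \<omega>) \<partial>Pr x')"
        by (rule nn_integral_distr[OF cm]) (use F in simp)
    qed
    finally show "(\<integral>\<^sup>+\<omega>. F \<omega> \<partial>(K (x, a) \<bind> (\<lambda>x'. distr (Pr x') ?S (\<lambda>\<omega>. (x, a) ## \<omega>)))) =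
        (\<integral>\<^sup>+x'. (\<integral>\<^sup>+\<omega>. F ((x, a) ## \<omega>) \<partial>Pr x') \<partial>K (x, a))" .
  qed
  finally show ?thesis .
qed


lemma proc_basic:
  fixes X :: "'x measure" and AM :: "'a measure"
  assumes law: "process_law X AM K pol Pr" and x: "x \<in> space X"
  shows "prob_space (Pr x)" "sets (Pr x) = sets (stream_space (X \<Otimes>\<^sub>M AM))"
    "space (Pr x) = space (stream_space (X \<Otimes>\<^sub>M AM))"
proof -
  have Prm: "Pr \<in> X \<rightarrow>\<^sub>M prob_algebra (stream_space (X \<Otimes>\<^sub>M AM))" using law by (simp add: process_law_def)
  have "Pr x \<in> space (prob_algebra (stream_space (X \<Otimes>\<^sub>M AM)))" using measurable_space[OF Prm x] .
  then show "prob_space (Pr x)" and s: "sets (Pr x) = sets (stream_space (X \<Otimes>\<^sub>M AM))"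
    by (auto simp: space_prob_algebra)
  show "space (Pr x) = space (stream_space (X \<Otimes>\<^sub>M AM))" by (rule sets_eq_imp_space_eq[OF s])
qed

lemma St_space:
  "\<omega> \<in> space (stream_space (X \<Otimes>\<^sub>M AM)) \<Longrightarrow> St t \<omega> \<in> space X"
  by (auto simp: St_def space_stream_space space_pair_measure dest!: snth_in[of _ _ t])

lemma St_meas[measurable]: "St t \<in> stream_space (X \<Otimes>\<^sub>M AM) \<rightarrow>\<^sub>M X"
  unfolding St_def[abs_def] by measurable

lemma St_Stream1: "St 1 (y ## \<omega>) = St 0 \<omega>"
  by (simp add: St_def)

lemma St_Stream_Suc: "St (Suc n) (y ## \<omega>) = St n \<omega>"
  by (simp add: St_def)

lemma st0_nn:
  fixes X :: "'x measure" and AM :: "'a measure"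
  assumes law: "process_law X AM K pol Pr"
    and polm: "pol \<in> X \<rightarrow>\<^sub>M prob_algebra AM"
    and Km: "K \<in> X \<Otimes>\<^sub>M AM \<rightarrow>\<^sub>M prob_algebra X"
    and x: "x \<in> space X"
    and h: "h \<in> borel_measurable X"
  shows "(\<integral>\<^sup>+\<omega>. h (St 0 \<omega>) \<partial>Pr x) = h x"
proof -
  have "(\<integral>\<^sup>+\<omega>. h (St 0 \<omega>) \<partial>Pr x) =
    (\<integral>\<^sup>+a. (\<integral>\<^sup>+x'. (\<integral>\<^sup>+\<omega>. h (St 0 ((x, a) ## \<omega>)) \<partial>Pr x') \<partial>K (x, a)) \<partial>pol x)"
    by (rule unfold_nn[OF law polm Km x]) (use h in measurable)
  also have "\<dots> = (\<integral>\<^sup>+a. h x \<partial>pol x)"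
  proof (rule nn_integral_cong)
    fix a assume "a \<in> space (pol x)"
    have polx: "pol x \<in> space (prob_algebra AM)" using measurable_space[OF polm x] .
    then have spol: "sets (pol x) = sets AM" by (simp add: space_prob_algebra)
    have a: "a \<in> space AM" using sets_eq_imp_space_eq[OF spol] \<open>a \<in> space (pol x)\<close> by simp
    have "K (x, a) \<in> space (prob_algebra X)" using measurable_space[OF Km] x a by (simp add: space_pair_measure)
    then have sK: "sets (K (x, a)) = sets X" and pK: "prob_space (K (x, a))" by (auto simp: space_prob_algebra)
    have "(\<integral>\<^sup>+x'. (\<integral>\<^sup>+\<omega>. h (St 0 ((x, a) ## \<omega>)) \<partial>Pr x') \<partial>K (x, a)) = (\<integral>\<^sup>+x'. h x \<partial>K (x, a))"
    proof (rule nn_integral_cong)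
      fix x' assume "x' \<in> space (K (x, a))"
      then have x': "x' \<in> space X" using sets_eq_imp_space_eq[OF sK] by simp
      interpret prob_space "Pr x'" using proc_basic[OF law x'] by simp
      show "(\<integral>\<^sup>+\<omega>. h (St 0 ((x, a) ## \<omega>)) \<partial>Pr x') = h x"
        by (simp add: St_def emeasure_space_1)
    qed
    also have "\<dots> = h x" using pK by (simp add: prob_space.emeasure_space_1)
    finally show "(\<integral>\<^sup>+x'. (\<integral>\<^sup>+\<omega>. h (St 0 ((x, a) ## \<omega>)) \<partial>Pr x') \<partial>K (x, a)) = h x" .
  qed
  also have "\<dots> = h x"
  proof -
    have "pol x \<in> space (prob_algebra AM)" using measurable_space[OF polm x] .
    then show ?thesis by (simp add: space_prob_algebra prob_space.emeasure_space_1)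
  qed
  finally show ?thesis .
qed

lemma st1_nn:
  fixes X :: "'x measure" and AM :: "'a measure"
  assumes law: "process_law X AM K pol Pr"
    and polm: "pol \<in> X \<rightarrow>\<^sub>M prob_algebra AM"
    and Km: "K \<in> X \<Otimes>\<^sub>M AM \<rightarrow>\<^sub>M prob_algebra X"
    and x: "x \<in> space X"
    and F: "F \<in> borel_measurable (stream_space (X \<Otimes>\<^sub>M AM))"
  shows "(\<integral>\<^sup>+\<omega>. F (stl \<omega>) \<partial>Pr x) = (\<integral>\<^sup>+\<omega>. (\<integral>\<^sup>+\<omega>'. F \<omega>' \<partial>Pr (St 1 \<omega>)) \<partial>Pr x)"
proof -
  have Prm[measurable]: "Pr \<in> X \<rightarrow>\<^sub>M prob_algebra (stream_space (X \<Otimes>\<^sub>M AM))"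
    using law by (simp add: process_law_def)
  note F[measurable]
  have Hm[measurable]: "(\<lambda>y. \<integral>\<^sup>+\<omega>'. F \<omega>' \<partial>Pr y) \<in> borel_measurable X"
    by (rule measurable_compose[OF measurable_prob_algebraD[OF Prm] nn_integral_measurable_subprob_algebra[OF F]])
  have "(\<integral>\<^sup>+\<omega>. F (stl \<omega>) \<partial>Pr x) =
    (\<integral>\<^sup>+a. (\<integral>\<^sup>+x'. (\<integral>\<^sup>+\<omega>. F (stl ((x, a) ## \<omega>)) \<partial>Pr x') \<partial>K (x, a)) \<partial>pol x)"
    by (rule unfold_nn[OF law polm Km x]) measurable
  also have "\<dots> = (\<integral>\<^sup>+a. (\<integral>\<^sup>+x'. (\<integral>\<^sup>+\<omega>. (\<integral>\<^sup>+\<omega>'. F \<omega>' \<partial>Pr (St 0 \<omega>)) \<partial>Pr x') \<partial>K (x, a)) \<partial>pol x)"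
  proof (rule nn_integral_cong, rule nn_integral_cong)
    fix a x' assume a: "a \<in> space (pol x)" and x'': "x' \<in> space (K (x, a))"
    have polx: "pol x \<in> space (prob_algebra AM)" using measurable_space[OF polm x] .
    then have spol: "sets (pol x) = sets AM" by (simp add: space_prob_algebra)
    have a: "a \<in> space AM" using sets_eq_imp_space_eq[OF spol] a by simp
    have "K (x, a) \<in> space (prob_algebra X)" using measurable_space[OF Km] x a by (simp add: space_pair_measure)
    then have sK: "sets (K (x, a)) = sets X" by (auto simp: space_prob_algebra)
    have x': "x' \<in> space X" using sets_eq_imp_space_eq[OF sK] x'' by simp
    show "(\<integral>\<^sup>+\<omega>. F (stl ((x, a) ## \<omega>)) \<partial>Pr x') = (\<integral>\<^sup>+\<omega>. (\<integral>\<^sup>+\<omega>'. F \<omega>' \<partial>Pr (St 0 \<omega>)) \<partial>Pr x')"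
      using st0_nn[OF law polm Km x' Hm] by simp
  qed
  also have "\<dots> = (\<integral>\<^sup>+a. (\<integral>\<^sup>+x'. (\<integral>\<^sup>+\<omega>. (\<integral>\<^sup>+\<omega>'. F \<omega>' \<partial>Pr (St 1 ((x, a) ## \<omega>))) \<partial>Pr x') \<partial>K (x, a)) \<partial>pol x)"
    by (simp add: St_Stream1 St_Stream_Suc)
  also have "\<dots> = (\<integral>\<^sup>+\<omega>. (\<integral>\<^sup>+\<omega>'. F \<omega>' \<partial>Pr (St 1 \<omega>)) \<partial>Pr x)"
    by (rule unfold_nn[OF law polm Km x, symmetric]) measurable
  finally show ?thesis .
qed

lemma AE_st0:
  fixes X :: "'x measure" and AM :: "'a measure"
  assumes law: "process_law X AM K pol Pr"
    and polm: "pol \<in> X \<rightarrow>\<^sub>M prob_algebra AM"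
    and Km: "K \<in> X \<Otimes>\<^sub>M AM \<rightarrow>\<^sub>M prob_algebra X"
    and x: "x \<in> space X" and Y: "Y \<in> sets X" and xY: "x \<in> Y"
  shows "AE \<omega> in Pr x. St 0 \<omega> \<in> Y"
proof -
  have hm: "indicator (space X - Y) \<in> borel_measurable X" using Y by measurable
  have "(\<integral>\<^sup>+\<omega>. indicator (space X - Y) (St 0 \<omega>) \<partial>Pr x) = 0"
    using st0_nn[OF law polm Km x hm] xY by simp
  moreover have "(\<lambda>\<omega>. indicator (space X - Y) (St 0 \<omega>) :: ennreal) \<in> borel_measurable (Pr x)"
    using measurable_compose[OF St_meas hm] by (simp add: measurable_cong_sets[OF proc_basic(2)[OF law x] refl])
  ultimately have "AE \<omega> in Pr x. (indicator (space X - Y) (St 0 \<omega>) :: ennreal) = 0"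
    by (simp add: nn_integral_0_iff_AE)
  moreover have "AE \<omega> in Pr x. St 0 \<omega> \<in> space X"
    by (rule AE_I2) (use proc_basic(3)[OF law x] St_space in blast)
  ultimately show ?thesis
    by eventually_elim (auto simp: indicator_def split: if_splits)
qed


lemma K_meas:
  assumes mdp: "labelled_mdp SM AM P mu AP L"
    and aut: "det_streett Q AP delta q0 Acc"
  shows "prod_kernel SM Q L delta P \<in> prod_space SM Q \<Otimes>\<^sub>M AM \<rightarrow>\<^sub>M prob_algebra (prod_space SM Q)"
proof -
  have Pm[measurable]: "P \<in> SM \<Otimes>\<^sub>M AM \<rightarrow>\<^sub>M prob_algebra SM" using mdp by (simp add: labelled_mdp_def)
  have Lm[measurable]: "L \<in> SM \<rightarrow>\<^sub>M count_space (Pow AP)" using mdp by (simp add: labelled_mdp_def)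
  have fQ: "finite Q" and dQ: "\<And>q l. q \<in> Q \<Longrightarrow> l \<in> Pow AP \<Longrightarrow> delta q l \<in> Q"
    using aut by (auto simp: det_streett_def)
  let ?X = "prod_space SM Q"
  have eq: "prod_kernel SM Q L delta P =
     (\<lambda>z. distr (P (fst (fst z), snd z)) ?X (\<lambda>s'. (s', delta (snd (fst z)) (L (fst (fst z))))))"
    by (auto simp: prod_kernel_def fun_eq_iff split: prod.split)
  have gm: "(\<lambda>z. P (fst (fst z), snd z)) \<in> ?X \<Otimes>\<^sub>M AM \<rightarrow>\<^sub>M prob_algebra SM"
    unfolding prod_space_def by measurable
  have dm: "(\<lambda>w. delta (snd (fst (fst w))) (L (fst (fst (fst w))))) \<in> (?X \<Otimes>\<^sub>M AM) \<Otimes>\<^sub>M SM \<rightarrow>\<^sub>M count_space Q"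
  proof (rule measurable_compose_countable'[where I=Q and g="\<lambda>w. snd (fst (fst w))"])
    fix q assume q: "q \<in> Q"
    have "delta q \<in> count_space (Pow AP) \<rightarrow>\<^sub>M count_space Q"
      using dQ[OF q] by auto
    then show "(\<lambda>w. delta q (L (fst (fst (fst w))))) \<in> (?X \<Otimes>\<^sub>M AM) \<Otimes>\<^sub>M SM \<rightarrow>\<^sub>M count_space Q"
      unfolding prod_space_def by measurable
  next
    show "(\<lambda>w. snd (fst (fst w))) \<in> (?X \<Otimes>\<^sub>M AM) \<Otimes>\<^sub>M SM \<rightarrow>\<^sub>M count_space Q"
      unfolding prod_space_def by measurable
  qed (use fQ in \<open>simp add: countable_finite\<close>)
  have fm: "(\<lambda>(z, s'). (s', delta (snd (fst z)) (L (fst (fst z))))) \<in> (?X \<Otimes>\<^sub>M AM) \<Otimes>\<^sub>M SM \<rightarrow>\<^sub>M ?X"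
  proof -
    have "(\<lambda>w. (snd w, delta (snd (fst (fst w))) (L (fst (fst (fst w)))))) \<in> (?X \<Otimes>\<^sub>M AM) \<Otimes>\<^sub>M SM \<rightarrow>\<^sub>M ?X"
      unfolding prod_space_def[of SM Q] by (intro measurable_Pair measurable_snd dm[unfolded prod_space_def])
    then show ?thesis by (simp add: case_prod_beta')
  qed
  show ?thesis unfolding eq
    by (rule measurable_distr_prob_space2[OF gm fm])
qed



lemma prod_lessThan_Suc_shift': "(\<Prod>i<Suc t. g i) = (g 0 :: real) * (\<Prod>i<t. g (Suc i))"
  by (induction t) (simp_all add: lessThan_Suc mult_ac)

theorem corollary3:
  fixes SM :: "'s measure" and AM :: "'act measure"
    and P :: "'s \<times> 'act \<Rightarrow> 's measure" and mu :: "'s measure"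
    and AP :: "'ap set" and L :: "'s \<Rightarrow> 'ap set"
    and Q :: "'q set" and delta :: "'q \<Rightarrow> 'ap set \<Rightarrow> 'q" and q0 :: 'q
    and Acc :: "('q set \<times> 'q set) set"
    and pol :: "'s \<times> 'q \<Rightarrow> 'act measure"
    and Pr :: "'s \<times> 'q \<Rightarrow> (('s \<times> 'q) \<times> 'act) stream measure"
    and gamma :: real and A B :: "'q set" and I :: "('s \<times> 'q) set"
    and Hbar rB rAB :: real
    and r :: "'s \<times> 'q \<Rightarrow> 'act \<Rightarrow> 's \<times> 'q \<Rightarrow> real"
    and Gam :: "'s \<times> 'q \<Rightarrow> real"
  assumes mdp: "labelled_mdp SM AM P mu AP L"
    and aut: "det_streett Q AP delta q0 Acc"
    and pol: "stationary_policy (prod_space SM Q) AM pol"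
    and law: "process_law (prod_space SM Q) AM (prod_kernel SM Q L delta P) pol Pr"
    and gamma: "0 < gamma" "gamma < 1"
    and AB: "(A, B) \<in> Acc"
    and I_meas: "I \<in> sets (prod_space SM Q)"
    and I_abs: "absorbing (prod_space SM Q) Pr I"
    and I_init: "measure (prod_init SM Q q0 mu) I = 1"
    and Hbar: "\<forall>x\<in>I. (\<integral>\<^sup>+\<omega>. step_count (space SM \<times> A) (space SM \<times> B) (smap fst \<omega>) \<partial>Pr x)
                 \<le> ennreal Hbar"
    and Hbar_nonneg: "0 \<le> Hbar"
    and rew: "\<forall>s q a x'. r (s, q) a x' =
                rB * indicator (space SM \<times> B) (s, q)
                - rAB * indicator ((space SM \<times> A) - (space SM \<times> B)) (s, q)"
    and rpos: "0 < rB" "0 < rAB"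
    and ratio: "rB / rAB \<ge> 1 / (1 - gamma) * (1 / gamma powr (Hbar + 1) - 1)"
    and disc: "\<forall>s q. Gam (s, q) = (if q \<in> A \<union> B then gamma else 1)"
  shows "streett_supermartingale Pr (prod_init SM Q q0 mu)
           (space SM \<times> A) (space SM \<times> B) I
           (\<lambda>x. rB / (1 - gamma) - value_fun Pr Gam r x)"
proof -
  define X where "X = prod_space SM Q"
  define SX where "SX = stream_space (X \<Otimes>\<^sub>M AM)"
  define As where "As = space SM \<times> A"
  define Bs where "Bs = space SM \<times> B"
  define c0 where "c0 = rAB / (1 - gamma)"
  define D where "D = rB / (1 - gamma) + c0"
  define rh where "rh = rho rB rAB As Bs"
  define tm where "tm = (\<lambda>\<omega> t. (\<Prod>i<t. Gam (St i \<omega>)) * r (St t \<omega>) (At t \<omega>) (St (Suc t) \<omega>))"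
  define Rf where "Rf = (\<lambda>\<omega>. \<Sum>t. tm \<omega> t)"
  define Gf where "Gf = (\<lambda>\<omega>. Rf \<omega> + c0)"
  define v where "v = (\<lambda>y. \<integral>\<omega>. Gf \<omega> \<partial>Pr y)"
  have polm: "pol \<in> X \<rightarrow>\<^sub>M prob_algebra AM" using pol by (simp add: stationary_policy_def X_def)
  have Km: "prod_kernel SM Q L delta P \<in> X \<Otimes>\<^sub>M AM \<rightarrow>\<^sub>M prob_algebra X"
    using K_meas[OF mdp aut] by (simp add: X_def)
  have law': "process_law X AM (prod_kernel SM Q L delta P) pol Pr" using law by (simp add: X_def)
  have Prm: "Pr \<in> X \<rightarrow>\<^sub>M prob_algebra SX" using law' by (simp add: process_law_def SX_def)
  have AQ: "A \<subseteq> Q" "B \<subseteq> Q" using aut AB by (auto simp: det_streett_def)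
  have spX: "space X = space SM \<times> Q" by (simp add: X_def prod_space_def space_pair_measure)
  have As_m[measurable]: "As \<in> sets X" unfolding As_def X_def prod_space_def using AQ by (intro pair_measureI) auto
  have Bs_m[measurable]: "Bs \<in> sets X" unfolding Bs_def X_def prod_space_def using AQ by (intro pair_measureI) auto
  have I_sub: "I \<subseteq> space X" using I_meas sets.sets_into_space X_def by auto
  have Gam_eq: "Gam y = (if y \<in> As \<union> Bs then gamma else 1)" if "y \<in> space X" for y
    using that disc spX by (cases y) (auto simp: As_def Bs_def)
  have r_eq: "r y a y' = rh y" for y a y'
  proof -
    obtain s q where y: "y = (s, q)" by (cases y)
    have "r (s, q) a y' = rB * indicator (space SM \<times> B) (s, q)
                - rAB * indicator ((space SM \<times> A) - (space SM \<times> B)) (s, q)"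
      using rew by blast
    then show ?thesis by (simp add: y rh_def rho_def As_def Bs_def)
  qed
  have Gam_m[measurable]: "Gam \<in> borel_measurable X"
  proof -
    have "(\<lambda>y. if y \<in> As \<union> Bs then gamma else 1) \<in> borel_measurable X" by measurable
    then show ?thesis by (rule measurable_cong[THEN iffD1, rotated]) (simp add: Gam_eq)
  qed
  have rh_m[measurable]: "rh \<in> borel_measurable X" unfolding rh_def rho_def by measurable
  have SX_St: "St t \<omega> \<in> space X" if "\<omega> \<in> space SX" for t \<omega>
    using St_space that unfolding SX_def by blast
  have SX_stl: "stl \<omega> \<in> space SX" if "\<omega> \<in> space SX" for \<omega>
    using that unfolding SX_def space_stream_space by (rule streams_stl)
  have tm_eq: "tm \<omega> t = dsc gamma (As \<union> Bs) ((!!) (smap fst \<omega>)) t * rh (smap fst \<omega> !! t)"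
    if "\<omega> \<in> space SX" for \<omega> t
    unfolding tm_def dsc_def r_eq using SX_St[OF that] by (simp add: Gam_eq St_def)
  have tm_fun: "tm \<omega> = (\<lambda>t. dsc gamma (As \<union> Bs) ((!!) (smap fst \<omega>)) t * rh (smap fst \<omega> !! t))"
    if "\<omega> \<in> space SX" for \<omega>
    by (rule ext) (rule tm_eq[OF that])
  have Rf_eq: "Rf \<omega> = (\<Sum>t. dsc gamma (As \<union> Bs) ((!!) (smap fst \<omega>)) t * rh (smap fst \<omega> !! t))"
    if "\<omega> \<in> space SX" for \<omega>
    unfolding Rf_def using tm_fun[OF that] by simp
  note pf = path_facts[OF gamma rpos, of As Bs, folded rh_def]
  have tm_s: "summable (tm \<omega>)" if "\<omega> \<in> space SX" for \<omega>
    using pf(1)[of "smap fst \<omega>"] tm_fun[OF that] by simp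
  have Gf_b: "0 \<le> Gf \<omega> \<and> Gf \<omega> \<le> D" if "\<omega> \<in> space SX" for \<omega>
    using pf(2,3)[of "smap fst \<omega>"] Rf_eq[OF that] unfolding Gf_def D_def c0_def by simp
  have Gf_K: "of_nat N \<le> step_count As Bs (smap fst \<omega>)"
    if "\<omega> \<in> space SX" "Gf \<omega> < rAB * gamma ^ N" for \<omega> N
    using pf(4)[of "smap fst \<omega>" N] Rf_eq[OF that(1)] that(2) unfolding Gf_def c0_def
    by (metis not_le)
  have Rf_shift: "Rf \<omega> = rh (St 0 \<omega>) + Gam (St 0 \<omega>) * Rf (stl \<omega>)" if "\<omega> \<in> space SX" for \<omega>
  proof -
    have "tm \<omega> (Suc t) = Gam (St 0 \<omega>) * tm (stl \<omega>) t" for t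
      unfolding tm_def prod_lessThan_Suc_shift' by (simp add: St_def At_def)
    then have "(\<Sum>t. tm \<omega> (Suc t)) = Gam (St 0 \<omega>) * Rf (stl \<omega>)"
      unfolding Rf_def using suminf_mult[OF tm_s[OF SX_stl[OF that]]] by simp
    moreover have "(\<Sum>t. tm \<omega> (Suc t)) = Rf \<omega> - tm \<omega> 0"
      unfolding Rf_def by (rule suminf_split_head[OF tm_s[OF that]])
    moreover have "tm \<omega> 0 = rh (St 0 \<omega>)" by (simp add: tm_def r_eq)
    ultimately show ?thesis by simp
  qed
  have Gf_m[measurable]: "Gf \<in> borel_measurable SX"
  proof -
    have "(\<lambda>\<omega>. (\<Sum>t. (\<Prod>i<t. Gam (St i \<omega>)) * rh (St t \<omega>)) + c0) \<in> borel_measurable SX"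
      unfolding SX_def by measurable
    moreover have "Gf = (\<lambda>\<omega>. (\<Sum>t. (\<Prod>i<t. Gam (St i \<omega>)) * rh (St t \<omega>)) + c0)"
      by (simp add: Gf_def Rf_def tm_def r_eq)
    ultimately show ?thesis by simp
  qed
  have v_m[measurable]: "v \<in> borel_measurable X"
    unfolding v_def
    by (rule measurable_compose[OF measurable_prob_algebraD[OF Prm] integral_measurable_subprob_algebra[OF Gf_m]])
  have Pr_basic: "prob_space (Pr y)" "sets (Pr y) = sets SX" "space (Pr y) = space SX"
    if "y \<in> space X" for y
    using proc_basic[OF law' that] unfolding SX_def by auto
  have pr1: "measure (Pr y) (space (Pr y)) = 1" if "y \<in> space X" for y
    using prob_space.prob_space[OF Pr_basic(1)[OF that]] .
  have mcong: "f \<in> borel_measurable (Pr y)" if "y \<in> space X" "f \<in> borel_measurable SX"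
    for y and f :: "_ \<Rightarrow> real"
    using that(2) by (simp add: measurable_cong_sets[OF Pr_basic(2)[OF that(1)] refl])
  have Gfs_m[measurable]: "(\<lambda>\<omega>. Gf (stl \<omega>)) \<in> borel_measurable SX"
    unfolding SX_def by (rule measurable_compose[OF measurable_stl Gf_m[unfolded SX_def]])
  have vSt_m[measurable]: "(\<lambda>\<omega>. v (St 1 \<omega>)) \<in> borel_measurable SX"
    unfolding SX_def by (rule measurable_compose[OF St_meas v_m])
  have bint: "integrable (Pr y) f" if "y \<in> space X" "f \<in> borel_measurable SX"
    "\<And>\<omega>. \<omega> \<in> space SX \<Longrightarrow> 0 \<le> f \<omega> \<and> f \<omega> \<le> D" for y and f :: "_ \<Rightarrow> real"
  proof -
    interpret prob_space "Pr y" using Pr_basic[OF that(1)] by simp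
    show ?thesis
    proof (rule integrable_const_bound[where B=D])
      show "AE \<omega> in Pr y. norm (f \<omega>) \<le> D"
        by (rule AE_I2) (use that(3) Pr_basic(3)[OF that(1)] in fastforce)
      show "f \<in> borel_measurable (Pr y)" by (rule mcong[OF that(1,2)])
    qed
  qed
  have Gf_int: "integrable (Pr y) Gf" if "y \<in> space X" for y
    by (rule bint[OF that Gf_m Gf_b])
  have Gfs_int: "integrable (Pr y) (\<lambda>\<omega>. Gf (stl \<omega>))" if "y \<in> space X" for y
    by (rule bint[OF that Gfs_m]) (use Gf_b SX_stl in blast)
  have v_b: "0 \<le> v y \<and> v y \<le> D" if "y \<in> space X" for y
  proof -
    interpret prob_space "Pr y" using Pr_basic[OF that(1)] by simp
    have "0 \<le> v y" unfolding v_def by (rule integral_nonneg_AE, rule AE_I2) (use Gf_b Pr_basic(3)[OF that] in auto)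
    moreover have "v y \<le> D" unfolding v_def
      by (rule integral_le_const[OF Gf_int[OF that]]) (rule AE_I2, use Gf_b Pr_basic(3)[OF that] in auto)
    ultimately show ?thesis by simp
  qed
  have vSt_int: "integrable (Pr y) (\<lambda>\<omega>. v (St 1 \<omega>))" if "y \<in> space X" for y
    by (rule bint[OF that vSt_m]) (use v_b SX_St in blast)
  have V_eq: "value_fun Pr Gam r y = v y - c0" if "y \<in> space X" for y
  proof -
    interpret prob_space "Pr y" using Pr_basic[OF that(1)] by simp
    have "value_fun Pr Gam r y = (\<integral>\<omega>. Gf \<omega> - c0 \<partial>Pr y)"
      unfolding value_fun_def Gf_def Rf_def tm_def by simp
    also have "\<dots> = v y - c0"
      unfolding v_def by (subst Bochner_Integration.integral_diff[OF Gf_int[OF that] integrable_const]) (simp add: pr1[OF that])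
    finally show ?thesis .
  qed
  have key: "(\<integral>\<omega>. v (St 1 \<omega>) \<partial>Pr x) = (\<integral>\<omega>. Gf (stl \<omega>) \<partial>Pr x)" if x: "x \<in> space X" for x
  proof -
    have "(\<integral>\<^sup>+\<omega>. ennreal (Gf (stl \<omega>)) \<partial>Pr x) = (\<integral>\<^sup>+\<omega>. (\<integral>\<^sup>+\<omega>'. ennreal (Gf \<omega>') \<partial>Pr (St 1 \<omega>)) \<partial>Pr x)"
      by (rule st1_nn[OF law' polm Km x]) (use Gf_m[unfolded SX_def] in measurable)
    also have "\<dots> = (\<integral>\<^sup>+\<omega>. ennreal (v (St 1 \<omega>)) \<partial>Pr x)"
    proof (rule nn_integral_cong)
      fix \<omega> assume "\<omega> \<in> space (Pr x)"
      then have y: "St 1 \<omega> \<in> space X" using SX_St Pr_basic(3)[OF x] by auto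
      show "(\<integral>\<^sup>+\<omega>'. ennreal (Gf \<omega>') \<partial>Pr (St 1 \<omega>)) = ennreal (v (St 1 \<omega>))"
        unfolding v_def
        by (rule nn_integral_eq_integral[OF Gf_int[OF y]]) (rule AE_I2, use Gf_b Pr_basic(3)[OF y] in auto)
    qed
    finally have eq: "(\<integral>\<^sup>+\<omega>. ennreal (v (St 1 \<omega>)) \<partial>Pr x) = (\<integral>\<^sup>+\<omega>. ennreal (Gf (stl \<omega>)) \<partial>Pr x)" ..
    have "(\<integral>\<omega>. v (St 1 \<omega>) \<partial>Pr x) = enn2real (\<integral>\<^sup>+\<omega>. ennreal (v (St 1 \<omega>)) \<partial>Pr x)"
      by (rule integral_eq_nn_integral[OF mcong[OF x vSt_m]])
         (rule AE_I2, use v_b SX_St Pr_basic(3)[OF x] in auto)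
    also have "\<dots> = enn2real (\<integral>\<^sup>+\<omega>. ennreal (Gf (stl \<omega>)) \<partial>Pr x)" by (simp only: eq)
    also have "\<dots> = (\<integral>\<omega>. Gf (stl \<omega>) \<partial>Pr x)"
      by (rule integral_eq_nn_integral[OF mcong[OF x Gfs_m], symmetric])
         (rule AE_I2, use Gf_b SX_stl Pr_basic(3)[OF x] in auto)
    finally show ?thesis .
  qed
  define W where "W = (\<lambda>x. rB / (1 - gamma) - value_fun Pr Gam r x)"
  have W_eq: "W y = D - v y" if "y \<in> space X" for y
    using V_eq[OF that] by (simp add: W_def D_def)
  have nnW: "(\<integral>\<^sup>+\<omega>. ennreal (W (St 1 \<omega>)) \<partial>Pr x) = ennreal (D - (\<integral>\<omega>. Gf (stl \<omega>) \<partial>Pr x))"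
    if x: "x \<in> space X" for x
  proof -
    interpret prob_space "Pr x" using Pr_basic[OF x] by simp
    have "(\<integral>\<^sup>+\<omega>. ennreal (W (St 1 \<omega>)) \<partial>Pr x) = (\<integral>\<^sup>+\<omega>. ennreal (D - v (St 1 \<omega>)) \<partial>Pr x)"
      by (rule nn_integral_cong) (use W_eq SX_St Pr_basic(3)[OF x] in auto)
    also have "\<dots> = ennreal (\<integral>\<omega>. D - v (St 1 \<omega>) \<partial>Pr x)"
      by (rule nn_integral_eq_integral[OF Bochner_Integration.integrable_diff[OF integrable_const vSt_int[OF x]]])
         (rule AE_I2, use v_b SX_St Pr_basic(3)[OF x] in auto)
    also have "(\<integral>\<omega>. D - v (St 1 \<omega>) \<partial>Pr x) = D - (\<integral>\<omega>. v (St 1 \<omega>) \<partial>Pr x)"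
      by (subst Bochner_Integration.integral_diff[OF integrable_const vSt_int[OF x]]) (simp add: pr1[OF x])
    finally show ?thesis using key[OF x] by simp
  qed
  define N where "N = nat \<lceil>2 * Hbar\<rceil> + 1"
  have N: "2 * Hbar \<le> real N" "0 < real N" unfolding N_def using Hbar_nonneg by linarith+
  define c1 where "c1 = rAB * gamma ^ N"
  have c1: "0 < c1" unfolding c1_def using rpos gamma by simp
  have lb: "c1 / 2 \<le> v x" if xI: "x \<in> I" for x
  proof -
    have x: "x \<in> space X" using xI I_sub by auto
    interpret prob_space "Pr x" using Pr_basic[OF x] by simp
    define E where "E = {\<omega> \<in> space SX. Gf \<omega> < c1}"
    have E_SX: "E \<in> sets SX" unfolding E_def by measurable
    have E_m: "E \<in> sets (Pr x)" using E_SX Pr_basic(2)[OF x] by simp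
    have "of_nat N * emeasure (Pr x) E = (\<integral>\<^sup>+\<omega>. of_nat N * indicator E \<omega> \<partial>Pr x)"
      by (rule nn_integral_cmult_indicator[OF E_m, symmetric])
    also have "\<dots> \<le> (\<integral>\<^sup>+\<omega>. step_count As Bs (smap fst \<omega>) \<partial>Pr x)"
    proof (rule nn_integral_mono)
      fix \<omega> assume "\<omega> \<in> space (Pr x)"
      show "of_nat N * indicator E \<omega> \<le> step_count As Bs (smap fst \<omega>)"
        using Gf_K[of \<omega> N] by (auto simp: E_def c1_def indicator_def)
    qed
    also have "\<dots> \<le> ennreal Hbar" using Hbar xI by (simp add: As_def Bs_def)
    finally have "ennreal (real N * measure (Pr x) E) \<le> ennreal Hbar"
      by (simp add: emeasure_eq_measure ennreal_mult ennreal_of_nat_eq_real_of_nat)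
    then have "real N * measure (Pr x) E \<le> Hbar" using Hbar_nonneg by simp
    then have "real N * measure (Pr x) E \<le> real N * (1 / 2)" using N by linarith
    then have mE: "measure (Pr x) E \<le> 1 / 2" using mult_le_cancel_left_pos[OF N(2)] by blast
    have "(\<integral>\<omega>. c1 * indicator (space SX - E) \<omega> \<partial>Pr x) \<le> v x"
      unfolding v_def
    proof (rule Bochner_Integration.integral_mono)
      show "integrable (Pr x) (\<lambda>\<omega>. c1 * indicator (space SX - E) \<omega>)"
        using E_SX Pr_basic(2)[OF x] by (intro integrable_mult_right integrable_real_indicator) (auto simp: less_top[symmetric])
      show "integrable (Pr x) Gf" by (rule Gf_int[OF x])
      fix \<omega> assume "\<omega> \<in> space (Pr x)"
      then have "\<omega> \<in> space SX" using Pr_basic(3)[OF x] by simp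
      then show "c1 * indicator (space SX - E) \<omega> \<le> Gf \<omega>"
        using Gf_b[of \<omega>] by (auto simp: E_def indicator_def)
    qed
    moreover have "(\<integral>\<omega>. c1 * indicator (space SX - E) \<omega> \<partial>Pr x) = c1 * (1 - measure (Pr x) E)"
    proof -
      have "(\<integral>\<omega>. c1 * indicator (space SX - E) \<omega> \<partial>Pr x) = c1 * measure (Pr x) (space (Pr x) - E)"
        using E_SX Pr_basic(2,3)[OF x] by simp
      also have "\<dots> = c1 * (1 - measure (Pr x) E)" using prob_compl[OF E_m] by simp
      finally show ?thesis .
    qed
    moreover have "c1 / 2 \<le> c1 * (1 - measure (Pr x) E)"
    proof -
      have "c1 * measure (Pr x) E \<le> c1 * (1 / 2)" using mE c1 by (intro mult_left_mono) auto
      then show ?thesis by (simp add: algebra_simps)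
    qed
    ultimately show ?thesis by linarith
  qed
  have shiftAB: "(\<integral>\<omega>. Gf (stl \<omega>) \<partial>Pr x) = v x / gamma" if x: "x \<in> space X" "x \<in> As - Bs" for x
  proof -
    have "AE \<omega> in Pr x. St 0 \<omega> \<in> As - Bs"
      by (rule AE_st0[OF law' polm Km x(1)]) (use x in auto)
    then have "AE \<omega> in Pr x. Gf \<omega> = gamma * Gf (stl \<omega>)"
    proof (rule AE_mp[OF _ AE_I2])
      fix \<omega> assume "\<omega> \<in> space (Pr x)"
      then have w: "\<omega> \<in> space SX" using Pr_basic(3)[OF x(1)] by simp
      show "St 0 \<omega> \<in> As - Bs \<longrightarrow> Gf \<omega> = gamma * Gf (stl \<omega>)"
      proof
        assume a: "St 0 \<omega> \<in> As - Bs"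
        have "Gf \<omega> = - rAB + gamma * Rf (stl \<omega>) + c0"
          using Rf_shift[OF w] Gam_eq[OF SX_St[OF w]] a by (simp add: Gf_def rh_def rho_def)
        also have "\<dots> = gamma * Gf (stl \<omega>)"
          using gamma unfolding Gf_def c0_def by (simp add: field_simps)
        finally show "Gf \<omega> = gamma * Gf (stl \<omega>)" .
      qed
    qed
    moreover have "(\<lambda>\<omega>. gamma * Gf (stl \<omega>)) \<in> borel_measurable SX" by measurable
    ultimately have "v x = (\<integral>\<omega>. gamma * Gf (stl \<omega>) \<partial>Pr x)"
      unfolding v_def by (intro integral_cong_AE mcong[OF x(1)] Gf_m)
    then show ?thesis using gamma by simp
  qed
  have shiftO: "(\<integral>\<omega>. Gf (stl \<omega>) \<partial>Pr x) = v x" if x: "x \<in> space X" "x \<notin> As \<union> Bs" for x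
  proof -
    have "AE \<omega> in Pr x. St 0 \<omega> \<in> space X - (As \<union> Bs)"
      by (rule AE_st0[OF law' polm Km x(1)]) (use x in auto)
    then have "AE \<omega> in Pr x. Gf \<omega> = Gf (stl \<omega>)"
    proof (rule AE_mp[OF _ AE_I2])
      fix \<omega> assume "\<omega> \<in> space (Pr x)"
      then have w: "\<omega> \<in> space SX" using Pr_basic(3)[OF x(1)] by simp
      show "St 0 \<omega> \<in> space X - (As \<union> Bs) \<longrightarrow> Gf \<omega> = Gf (stl \<omega>)"
        using Rf_shift[OF w] Gam_eq[OF SX_St[OF w]] by (auto simp: Gf_def rh_def rho_def)
    qed
    then have "v x = (\<integral>\<omega>. Gf (stl \<omega>) \<partial>Pr x)"
      unfolding v_def by (intro integral_cong_AE mcong[OF x(1)] Gf_m Gfs_m)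
    then show ?thesis by simp
  qed
  define eps where "eps = (1 / gamma - 1) * (c1 / 2)"
  have eps: "0 < eps" unfolding eps_def using gamma c1 by simp
  show ?thesis
    unfolding streett_supermartingale_def W_def[symmetric] As_def[symmetric] Bs_def[symmetric]
  proof (intro conjI)
    show "\<forall>x\<in>I. 0 \<le> W x" using W_eq v_b I_sub by auto
    show "measure (prod_init SM Q q0 mu) I = 1" by (rule I_init)
    show "\<forall>x\<in>I. measure (Pr x) {\<omega> \<in> space (Pr x). St 1 \<omega> \<in> I} = 1"
      using I_abs by (simp add: absorbing_def)
    show "\<exists>\<epsilon>>0. \<forall>x\<in>(As - Bs) \<inter> I. (\<integral>\<^sup>+\<omega>. ennreal (W (St 1 \<omega>)) \<partial>Pr x) + ennreal \<epsilon> \<le> ennreal (W x)"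
    proof (intro exI conjI ballI)
      show "0 < eps" by (rule eps)
      fix x assume xx: "x \<in> (As - Bs) \<inter> I"
      then have x: "x \<in> space X" using I_sub by auto
      have sh: "(\<integral>\<omega>. Gf (stl \<omega>) \<partial>Pr x) = v x / gamma" using shiftAB[OF x] xx by auto
      have lbx: "c1 / 2 \<le> v x" using lb xx by auto
      have le: "v x / gamma \<le> D"
      proof -
        interpret prob_space "Pr x" using Pr_basic[OF x] by simp
        have "(\<integral>\<omega>. Gf (stl \<omega>) \<partial>Pr x) \<le> D"
          by (rule integral_le_const[OF Gfs_int[OF x]]) (rule AE_I2, use Gf_b SX_stl Pr_basic(3)[OF x] in auto)
        then show ?thesis using sh by simp
      qed
      have "eps \<le> v x / gamma - v x"
      proof -
        have "eps \<le> (1 / gamma - 1) * v x" unfolding eps_def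
          using lbx gamma by (intro mult_left_mono) (auto simp: field_simps)
        also have "\<dots> = v x / gamma - v x" by (simp add: field_simps)
        finally show ?thesis .
      qed
      then have "D - v x / gamma + eps \<le> D - v x" by simp
      moreover have "ennreal (D - v x / gamma) + ennreal eps = ennreal (D - v x / gamma + eps)"
        using le eps by (simp add: ennreal_plus)
      ultimately show "(\<integral>\<^sup>+\<omega>. ennreal (W (St 1 \<omega>)) \<partial>Pr x) + ennreal eps \<le> ennreal (W x)"
        unfolding nnW[OF x] sh W_eq[OF x] by (simp add: ennreal_leI)
    qed
    show "\<forall>x\<in>I - (As \<union> Bs). (\<integral>\<^sup>+\<omega>. ennreal (W (St 1 \<omega>)) \<partial>Pr x) \<le> ennreal (W x)"
    proof
      fix x assume xx: "x \<in> I - (As \<union> Bs)"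
      then have x: "x \<in> space X" using I_sub by auto
      show "(\<integral>\<^sup>+\<omega>. ennreal (W (St 1 \<omega>)) \<partial>Pr x) \<le> ennreal (W x)"
        unfolding nnW[OF x] W_eq[OF x] using shiftO[OF x] xx by simp
    qed
  qed
qed

end
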